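(* Let $K=\mathrm{GF}(2)(x)[Y]/(Y^2+xY+1)$ and $\rho$ the residue class of $Y$. For every $k\ge1$, $$x\,f^{(2k-2)}(x,1)=x\,f^{(2k-1)}(x,1)=(1+\rho)\rho^k+(1+\rho^{-1})\rho^{-k}.$$
   Context: $\mathbb{F}=\mathrm{GF}(2)$, $R=\mathbb{F}[x,z]$, $|\cdot|$ is total degree. Let $(r_0,r_1,\ldots)$ be the binary sequence with $r_i=1$ if $i=2^j-1$ for some $j\ge 0$ and $r_i=0$ otherwise. For $n\ge1$ its inverse form is $R^{(1-n)}=\sum_{j=1-n}^{0}r_{-j}\,x^{j}z^{1-n-j}\in\mathbb{F}[x^{-1},z^{-1}]$. For a form $f\in R$ and such a form $G$, $\Delta(f;G)$ is the coefficient of $x^{|f|+|G|}z^0$ in $f\cdot G$ computed in $\mathbb{F}[x^{\pm1},z^{\pm1}]$ if $|f|+|G|\le 0$, and $0$ otherwise. Define forms recursively: $(f^{(0)},g^{(0)})=(x+z,z)$; for $k\ge0$ let $d_k=|g^{(k)}|-|f^{(k)}|$ and $\Delta_k=\Delta(f^{(k)};R^{(-1-k)})$, and set $(f^{(k+1)},g^{(k+1)})=(f^{(k)},zg^{(k)})$ if $\Delta_k=0$; $=(f^{(k)}+x^{-d_k}g^{(k)},\,zg^{(k)})$ if $\Delta_k=1$ and $d_k\le0$; $=(x^{d_k}f^{(k)}+g^{(k)},\,zf^{(k)})$ if $\Delta_k=1$ and $d_k>0$. *)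

theory Defs
  imports "HOL-Library.Z2" "HOL-Computational_Algebra.Polynomial" "HOL-Computational_Algebra.Polynomial_Factorial"
begin

text \<open>A bivariate polynomial f in R = GF(2)[x,z] is represented as
  a polynomial in z whose coefficients are polynomials in x, i.e. a bit poly poly; the
  coefficient of x^i z^j in f is coeff (coeff f j) i.\<close>

type_synonym form = "bit poly poly"

definition cf :: "form \<Rightarrow> nat \<Rightarrow> nat \<Rightarrow> bit" where
  "cf f i j = coeff (coeff f j) i"

definition Xf :: form where "Xf = [:[:0, 1:]:]"
definition Zf :: form where "Zf = [:0, 1:]"

definition tdeg :: "form \<Rightarrow> nat" where
  "tdeg f = Max (insert 0 {i + j | i j. cf f i j \<noteq> 0})"

definition rseq :: "nat \<Rightarrow> bit" where
  "rseq i = (if \<exists>j. i = 2 ^ j - 1 then 1 else 0)"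

text \<open>Coefficient of x^a z^b (a, b integers) in the inverse form
  R^(1-n) = sum_{j=1-n}^{0} r_(-j) x^j z^(1-n-j).\<close>
definition Rinv :: "nat \<Rightarrow> int \<Rightarrow> int \<Rightarrow> bit" where
  "Rinv n a b = (if 1 - int n \<le> a \<and> a \<le> 0 \<and> b = 1 - int n - a then rseq (nat (- a)) else 0)"

text \<open>Delta(f; R^(1-n)): coefficient of x^(|f|+|G|) z^0 in f * G (Laurent product), with
  |G| = 1 - n, if |f| + |G| <= 0, and 0 otherwise.\<close>
definition Delta :: "form \<Rightarrow> nat \<Rightarrow> bit" where
  "Delta f n = (if int (tdeg f) + (1 - int n) \<le> 0 then
      (\<Sum>(i, j) \<in> {..tdeg f} \<times> {..tdeg f}.
         cf f i j * Rinv n (int (tdeg f) + (1 - int n) - int i) (0 - int j))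
    else 0)"

fun fg :: "nat \<Rightarrow> form \<times> form" where
  "fg 0 = (Xf + Zf, Zf)"
| "fg (Suc k) = (let (f, g) = fg k;
                     d = int (tdeg g) - int (tdeg f);
                     \<Delta> = Delta f (k + 2) in
     if \<Delta> = 0 then (f, Zf * g)
     else if d \<le> 0 then (f + Xf ^ nat (- d) * g, Zf * g)
     else (Xf ^ nat d * f + g, Zf * f))"

definition eval_z1 :: "form \<Rightarrow> bit poly" where
  "eval_z1 f = poly f 1"

text \<open>K = GF(2)(x)[Y]/(Y^2 + xY + 1): elements are represented by polynomials in Y over
  GF(2)(x) = bit poly fract, equality in K being equality of residues modulo mY.\<close>
definition xK :: "bit poly fract" where "xK = to_fract [:0, 1:]"
definition mY :: "bit poly fract poly" where "mY = [:1, xK, 1:]"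
definition rho :: "bit poly fract poly" where "rho = [:0, 1:]"

end

theory Submission
  imports Defs "HOL-Computational_Algebra.Polynomial_FPS"
begin

lemma two_fps: "(2::bit fps) = 0"
  by (metis bit_2_eq_0 fps_const_0_eq_0 numeral_fps_const)

lemma bit_add_self [simp]: "(x::bit) + x = 0"
  by (cases x) simp_all

lemma sum_sym_bit:
  fixes g :: "nat \<Rightarrow> bit"
  assumes sym: "\<And>i. i \<le> n \<Longrightarrow> g (n - i) = g i"
  shows "(\<Sum>i=0..n. g i) = (if even n then g (n div 2) else 0)"
proof -
  define A where "A = {i. i \<le> n \<and> 2*i < n}"
  define B where "B = {i. i \<le> n \<and> 2*i > n}"
  define C where "C = {i. i \<le> n \<and> 2*i = n}"
  have fin: "finite A" "finite B" "finite C" unfolding A_def B_def C_def by auto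
  have split: "{0..n} = A \<union> B \<union> C" unfolding A_def B_def C_def by auto
  have disj: "A \<inter> B = {}" "(A \<union> B) \<inter> C = {}" unfolding A_def B_def C_def by auto
  have "(\<Sum>i=0..n. g i) = sum g A + sum g B + sum g C"
    unfolding split using fin disj by (simp add: sum.union_disjoint)
  moreover have "sum g B = sum g A"
    by (rule sum.reindex_bij_witness[where i="\<lambda>i. n - i" and j="\<lambda>i. n - i"])
       (auto simp: A_def B_def sym)
  moreover have "sum g C = (if even n then g (n div 2) else 0)"
  proof (cases "even n")
    case True
    then have "C = {n div 2}" unfolding C_def by auto
    then show ?thesis using True by simp
  next
    case False
    then have "C = {}" unfolding C_def by auto
    then show ?thesis using False by simp
  qed
  ultimately show ?thesis by simp
qed

lemma fps_square_bit: "fps_nth ((f::bit fps) * f) n = (if even n then fps_nth f (n div 2) else 0)"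
proof -
  have "fps_nth (f*f) n = (\<Sum>i=0..n. fps_nth f i * fps_nth f (n - i))" by (rule fps_mult_nth)
  also have "\<dots> = (if even n then fps_nth f (n div 2) * fps_nth f (n - n div 2) else 0)"
    by (rule sum_sym_bit) (simp add: mult.commute)
  also have "\<dots> = (if even n then fps_nth f (n div 2) else 0)"
    by (auto elim!: evenE)
  finally show ?thesis .
qed

definition Rf :: "bit fps" where "Rf = Abs_fps rseq"

lemma rseq_rec: "rseq n = (if n = 0 then 1 else if even (n - 1) then rseq ((n - 1) div 2) else 0)"
proof (cases n)
  case 0
  then show ?thesis by (auto simp: rseq_def intro: exI[of _ 0])
next
  case (Suc n')
  show ?thesis
  proof (cases "even n'")
    case True
    then obtain m where m: "n' = 2*m" by (auto elim: evenE)
    have "(\<exists>j. Suc (2*m) = 2^j - 1) \<longleftrightarrow> (\<exists>j. m = 2^j - 1)"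
    proof
      assume "\<exists>j. Suc (2*m) = 2^j - 1"
      then obtain j where j: "Suc (2*m) = 2^j - 1" by blast
      then have "j \<noteq> 0" by (cases j) auto
      then obtain j' where "j = Suc j'" by (cases j) auto
      with j have "m = 2^j' - 1" by simp
      then show "\<exists>j. m = 2^j - 1" by blast
    next
      assume "\<exists>j. m = 2^j - 1"
      then obtain j where "m = 2^j - 1" by blast
      moreover have "(1::nat) \<le> 2^j" by simp
      ultimately have "Suc (2*m) = 2*2^j - 1" by arith
      then have "Suc (2*m) = 2^(Suc j) - 1" by simp
      then show "\<exists>j. Suc (2*m) = 2^j - 1" by blast
    qed
    then show ?thesis using Suc m by (simp add: rseq_def)
  next
    case False
    then obtain m where m: "n' = 2*m+1" by (auto elim: oddE)
    have "\<not> (\<exists>j. Suc (2*m+1) = 2^j - 1)"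
    proof
      assume "\<exists>j. Suc (2*m+1) = 2^j - 1"
      then obtain j where j: "Suc (2*m+1) = 2^j - 1" by blast
      then have "j \<noteq> 0" by (cases j) auto
      then obtain j' where jj: "j = Suc j'" by (cases j) auto
      have "(1::nat) \<le> 2^j'" by simp
      with j jj have "2*m + 3 = 2 * 2^j'" by simp
      then show False by presburger
    qed
    then show ?thesis using Suc m False by (simp add: rseq_def)
  qed
qed

lemma Rf_nth: "fps_nth Rf n = rseq n" by (simp add: Rf_def)

lemma Rf_eq: "Rf = 1 + fps_X * (Rf * Rf)"
proof (rule fps_ext)
  fix n
  show "fps_nth Rf n = fps_nth (1 + fps_X * (Rf * Rf)) n"
    using rseq_rec[of n] by (auto simp: fps_square_bit Rf_nth)
qed

definition lam :: "bit fps" where "lam = fps_X * (1 + Rf)"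

lemma lam_sq: "lam * lam = lam + fps_X * fps_X"
proof -
  have h: "Rf - 1 - fps_X * (Rf * Rf) = 0" by (subst (1) Rf_eq) simp
  have "lam * lam = lam + fps_X * fps_X - fps_X * (Rf - 1 - fps_X * (Rf * Rf)) + 2 * (fps_X * Rf * fps_X - fps_X)"
    unfolding lam_def by algebra
  then show ?thesis using h two_fps by simp
qed

lemma D1: "((1 + fps_X + fps_X*fps_X) * Rf + 1) = lam * ((1 + fps_X) * Rf + 1)"
proof -
  have h: "Rf - 1 - fps_X * (Rf * Rf) = 0" by (subst (1) Rf_eq) simp
  have "lam * ((1 + fps_X) * Rf + 1) = ((1 + fps_X + fps_X*fps_X) * Rf + 1) - (1 + fps_X) * (Rf - 1 - fps_X * (Rf * Rf)) + 2 * (fps_X * Rf - 1)"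
    unfolding lam_def by algebra
  then show ?thesis using h two_fps by simp
qed

fun PG :: "nat \<Rightarrow> bit poly \<times> bit poly" where
  "PG 0 = ([:1,1:], [:0,1:])"
| "PG (Suc m) = (fst (PG m) + pCons 0 (snd (PG m)), pCons 0 (fst (PG m)))"

definition Pz :: "nat \<Rightarrow> bit poly" where "Pz m = fst (PG m)"
definition Gz :: "nat \<Rightarrow> bit poly" where "Gz m = snd (PG m)"

lemma Pz_0: "Pz 0 = [:1,1:]" and Gz_0: "Gz 0 = [:0,1:]"
  and Pz_Suc: "Pz (Suc m) = Pz m + pCons 0 (Gz m)" and Gz_Suc: "Gz (Suc m) = pCons 0 (Pz m)"
  by (simp_all add: Pz_def Gz_def)

fun Qz :: "nat \<Rightarrow> bit poly" where
  "Qz 0 = 1"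
| "Qz (Suc 0) = 1"
| "Qz (Suc (Suc m)) = Qz (Suc m) + pCons 0 (pCons 0 (Qz m))"

lemma Qz_deg: "n > m \<Longrightarrow> coeff (Qz m) n = 0"
proof (induction m arbitrary: n rule: Qz.induct)
  case 1 then show ?case by (simp add: coeff_1)
next
  case 2 then show ?case by (simp add: coeff_1)
next
  case (3 m)
  then show ?case by (cases n; cases "n - 1") (auto simp: coeff_pCons)
qed

definition D :: "nat \<Rightarrow> bit fps" where
  "D m = fps_of_poly (Pz m) * Rf + fps_of_poly (Qz m)"

lemma fps_of_poly_pCons0: "fps_of_poly (pCons 0 p) = fps_X * fps_of_poly (p :: bit poly)"
  by (simp add: fps_of_poly_pCons mult.commute)

lemma D_0: "D 0 = (1 + fps_X) * Rf + 1"
  by (simp add: D_def Pz_0 fps_of_poly_pCons mult.commute)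

lemma D_1: "D (Suc 0) = (1 + fps_X + fps_X * fps_X) * Rf + 1"
  by (simp add: D_def Pz_Suc Pz_0 Gz_0 fps_of_poly_pCons fps_of_poly_add algebra_simps)

lemma D_SS: "D (Suc (Suc m)) = D (Suc m) + fps_X * fps_X * D m"
proof -
  have "Pz (Suc (Suc m)) = Pz (Suc m) + pCons 0 (pCons 0 (Pz m))"
    by (simp add: Pz_Suc Gz_Suc)
  then show ?thesis
    by (simp add: D_def fps_of_poly_add fps_of_poly_pCons0 algebra_simps)
qed

lemma D_eq: "D m = lam ^ m * D 0 \<and> D (Suc m) = lam ^ Suc m * D 0"
proof (induction m)
  case 0
  then show ?case using D1 by (simp add: D_0 D_1)
next
  case (Suc m)
  then have "D (Suc (Suc m)) = lam ^ Suc m * D 0 + fps_X * fps_X * (lam ^ m * D 0)"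
    by (simp add: D_SS)
  also have "\<dots> = lam ^ m * (lam + fps_X * fps_X) * D 0" by (simp add: algebra_simps)
  also have "\<dots> = lam ^ Suc (Suc m) * D 0" by (simp add: lam_sq[symmetric] algebra_simps)
  finally show ?case using Suc by simp
qed

lemma fps_split_X_power:
  assumes "\<And>i. i < k \<Longrightarrow> fps_nth f i = 0"
  shows "f = fps_X ^ k * fps_shift k f"
  by (rule fps_ext) (auto simp: fps_X_power_mult_nth assms)

lemma fps_power_nth0: "fps_nth ((f::bit fps) ^ m) 0 = (fps_nth f 0) ^ m"
  by (induction m) simp_all

lemma rseq_012: "rseq 0 = 1" "rseq 1 = 1" "rseq 2 = 0"
  by (subst rseq_rec; simp)+

lemma D_coeffs: "fps_nth (D m) n = (if n < 2*m+2 then 0 else if n = 2*m+2 then 1 else fps_nth (D m) n)"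
proof -
  define \<delta> where "\<delta> = fps_shift 2 (D 0)"
  define \<nu> where "\<nu> = fps_shift 1 (1 + Rf)"
  have d0: "fps_nth (D 0) i = 0" if "i < 2" for i
  proof -
    have "i = 0 \<or> i = 1" using that by auto
    then show ?thesis using rseq_012 by (auto simp: D_0 algebra_simps Rf_nth)
  qed
  have dd: "D 0 = fps_X ^ 2 * \<delta>" unfolding \<delta>_def by (rule fps_split_X_power) (rule d0)
  have "1 + Rf = fps_X ^ 1 * \<nu>" unfolding \<nu>_def
    by (rule fps_split_X_power) (simp add: Rf_nth rseq_012)
  then have ll: "lam = fps_X ^ 2 * \<nu>" by (simp add: lam_def power2_eq_square)
  have "D m = (fps_X ^ 2 * \<nu>) ^ m * (fps_X ^ 2 * \<delta>)"
    using D_eq[of m] ll dd by simp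
  also have "\<dots> = fps_X ^ (2*m+2) * (\<nu> ^ m * \<delta>)"
  proof -
    have a: "(fps_X ^ 2 * \<nu>) ^ m = (fps_X ^ 2) ^ m * \<nu> ^ m" by (rule power_mult_distrib)
    have b: "(fps_X::bit fps) ^ (2*m+2) = (fps_X ^ 2) ^ m * fps_X ^ 2"
      by (simp only: power_add power_mult)
    show ?thesis unfolding a b by (simp only: mult_ac)
  qed
  finally have dm: "D m = fps_X ^ (2*m+2) * (\<nu> ^ m * \<delta>)" .
  have e: "fps_nth (D m) n = (if n < 2*m+2 then 0 else fps_nth (\<nu> ^ m * \<delta>) (n - (2*m+2)))"
    by (subst dm) (rule fps_X_power_mult_nth)
  moreover have "fps_nth \<delta> 0 = 1" unfolding \<delta>_def
    using rseq_012 by (simp add: D_0 algebra_simps Rf_nth numeral_2_eq_2)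
  moreover have "fps_nth \<nu> 0 = 1" unfolding \<nu>_def using rseq_012 by (simp add: Rf_nth)
  ultimately show ?thesis by (simp only: e) (simp add: fps_power_nth0)
qed

lemma fps_add_self: "(a::bit fps) + a = 0"
  by (simp add: mult_2[symmetric] two_fps)

lemma D_c1: "fps_nth (D m) (2*m+1) = 0"
proof -
  have "2*m+1 < 2*m+2" by simp
  then show ?thesis using D_coeffs[of m "2*m+1"] by presburger
qed

lemma D_c2: "fps_nth (D m) (2*m+2) = 1"
  using D_coeffs[of m "2*m+2"] by presburger

lemma PR_coeffs:
  "fps_nth (fps_of_poly (Pz m) * Rf) (2*m+1) = 0"
  "fps_nth (fps_of_poly (Pz m) * Rf) (2*m+2) = 1"
proof -
  have e: "fps_of_poly (Pz m) * Rf = D m + fps_of_poly (Qz m)"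
  proof -
    have "D m + fps_of_poly (Qz m) = fps_of_poly (Pz m) * Rf + (fps_of_poly (Qz m) + fps_of_poly (Qz m))"
      by (simp only: D_def add.assoc)
    then show ?thesis by (simp only: fps_add_self add_0_right)
  qed
  have q1: "coeff (Qz m) (2*m+1) = 0" by (rule Qz_deg) simp
  have q2: "coeff (Qz m) (2*m+2) = 0" by (rule Qz_deg) simp
  show "fps_nth (fps_of_poly (Pz m) * Rf) (2*m+1) = 0"
    unfolding e fps_add_nth fps_of_poly_nth D_c1 q1 by simp
  show "fps_nth (fps_of_poly (Pz m) * Rf) (2*m+2) = 1"
    unfolding e fps_add_nth fps_of_poly_nth D_c2 q2 by simp
qed


definition H :: "nat \<Rightarrow> bit poly \<Rightarrow> form" where
  "H d p = (\<Sum>j\<le>d. monom (monom (coeff p j) (d - j)) j)"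

lemma coeff_H: "coeff (H d p) j = (if j \<le> d then monom (coeff p j) (d - j) else 0)"
  by (simp add: H_def coeff_sum coeff_monom)

lemma cf_H: "cf (H d p) i j = (if j \<le> d \<and> i = d - j then coeff p j else 0)"
  by (auto simp: cf_def coeff_H coeff_monom)

lemma tdeg_H:
  assumes "p \<noteq> 0" "degree p \<le> d"
  shows "tdeg (H d p) = d"
proof -
  have "{i + j | i j. cf (H d p) i j \<noteq> 0} = {d}"
  proof
    show "{i + j | i j. cf (H d p) i j \<noteq> 0} \<subseteq> {d}"
      by (auto simp: cf_H split: if_splits)
    have "cf (H d p) (d - degree p) (degree p) \<noteq> 0"
      using assms by (simp add: cf_H)
    moreover have "d - degree p + degree p = d" using assms by simp
    ultimately show "{d} \<subseteq> {i + j | i j. cf (H d p) i j \<noteq> 0}" by force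
  qed
  then show ?thesis by (simp add: tdeg_def)
qed

lemma H_add: "H d p + H d q = H d (p + q)"
  by (rule poly_eqI) (simp add: coeff_H add_monom)

lemma H_X:
  assumes "degree p \<le> d"
  shows "Xf * H d p = H (Suc d) p"
proof (rule poly_eqI)
  fix j
  have x: "Xf * F = smult (monom 1 1) F" for F
    by (simp add: Xf_def monom_Suc one_pCons)
  show "coeff (Xf * H d p) j = coeff (H (Suc d) p) j"
  proof (cases "j \<le> d")
    case True
    then have "Suc d - j = 1 + (d - j)" by simp
    then show ?thesis using True by (simp add: x coeff_H mult_monom)
  next
    case False
    then have "coeff p j = 0" using assms by (simp add: coeff_eq_0)
    then show ?thesis using False by (simp add: x coeff_H)
  qed
qed

lemma H_Z:
  assumes "degree p \<le> d"
  shows "Zf * H d p = H (Suc d) (pCons 0 p)"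
proof (rule poly_eqI)
  fix j
  have z: "Zf * F = pCons 0 F" for F
    by (simp add: Zf_def)
  show "coeff (Zf * H d p) j = coeff (H (Suc d) (pCons 0 p)) j"
    by (cases j) (simp_all add: z coeff_H)
qed

lemma H_base: "H 1 [:1,1:] = Xf + Zf" "H 1 [:0,1:] = Zf"
  by (simp_all add: H_def Xf_def Zf_def monom_Suc monom_0)

lemma Delta_H:
  assumes "p \<noteq> 0" "degree p \<le> d" "d < n"
  shows "Delta (H d p) n = (\<Sum>j\<le>d. coeff p j * rseq (n - 1 - j))"
proof -
  have t: "tdeg (H d p) = d" using assms(1,2) by (rule tdeg_H)
  have c: "int d + (1 - int n) \<le> 0" using assms by simp
  have inner: "(\<Sum>i\<le>d. cf (H d p) i j * Rinv n (int d + (1 - int n) - int i) (0 - int j))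
      = coeff p j * rseq (n - 1 - j)" if "j \<le> d" for j
  proof -
    have "(\<Sum>i\<le>d. cf (H d p) i j * Rinv n (int d + (1 - int n) - int i) (0 - int j))
       = (\<Sum>i\<le>d. if i = d - j then coeff p j * Rinv n (int d + (1 - int n) - int i) (0 - int j) else 0)"
      using that by (intro sum.cong) (auto simp: cf_H)
    also have "\<dots> = coeff p j * Rinv n (int d + (1 - int n) - int (d - j)) (0 - int j)"
      by (simp add: sum.delta')
    also have "Rinv n (int d + (1 - int n) - int (d - j)) (0 - int j) = rseq (n - 1 - j)"
    proof -
      have e: "int d + (1 - int n) - int (d - j) = int j + 1 - int n" using that by simp
      have "nat (- (int j + 1 - int n)) = n - 1 - j" using that assms by simp
      then show ?thesis unfolding e Rinv_def using that assms by simp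
    qed
    finally show ?thesis .
  qed
  have "Delta (H d p) n = (\<Sum>(i, j) \<in> {..d} \<times> {..d}.
         cf (H d p) i j * Rinv n (int d + (1 - int n) - int i) (0 - int j))"
    unfolding Delta_def t using c by simp
  also have "\<dots> = (\<Sum>i\<le>d. \<Sum>j\<le>d. cf (H d p) i j * Rinv n (int d + (1 - int n) - int i) (0 - int j))"
    by (simp only: sum.cartesian_product)
  also have "\<dots> = (\<Sum>j\<le>d. \<Sum>i\<le>d. cf (H d p) i j * Rinv n (int d + (1 - int n) - int i) (0 - int j))"
    by (rule sum.swap)
  also have "\<dots> = (\<Sum>j\<le>d. coeff p j * rseq (n - 1 - j))"
    by (intro sum.cong refl inner) simp
  finally show ?thesis .
qed

lemma Delta_H_fps:
  assumes "p \<noteq> 0" "degree p \<le> d" "d < n"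
  shows "Delta (H d p) n = fps_nth (fps_of_poly p * Rf) (n - 1)"
proof -
  have "fps_nth (fps_of_poly p * Rf) (n - 1) = (\<Sum>j=0..n-1. coeff p j * rseq (n - 1 - j))"
    by (simp add: fps_mult_nth Rf_nth)
  also have "\<dots> = (\<Sum>j\<le>d. coeff p j * rseq (n - 1 - j))"
  proof (rule sum.mono_neutral_right)
    show "finite {0..n-1}" by simp
    show "{..d} \<subseteq> {0..n-1}" using assms by auto
    show "\<forall>j\<in>{0..n - 1} - {..d}. coeff p j * rseq (n - 1 - j) = 0"
      using assms by (auto simp: coeff_eq_0)
  qed
  finally show ?thesis using Delta_H[OF assms] by simp
qed

lemma Pz_c0: "coeff (Pz m) 0 = 1"
  by (induction m) (simp_all add: Pz_0 Pz_Suc)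

lemma Pz_ne: "Pz m \<noteq> 0" using Pz_c0[of m] by auto

lemma PG_props: "degree (Pz m) \<le> Suc m \<and> degree (Gz m) \<le> Suc m \<and> coeff (Pz m) 0 = 1 \<and> Gz m \<noteq> 0"
proof (induction m)
  case 0
  then show ?case by (simp add: Pz_0 Gz_0)
next
  case (Suc m)
  have "degree (pCons 0 (Gz m)) \<le> Suc (Suc m)"
    using Suc by (simp add: degree_pCons_eq)
  then have "degree (Pz (Suc m)) \<le> Suc (Suc m)"
    unfolding Pz_Suc using Suc by (intro degree_add_le) auto
  moreover have "degree (Gz (Suc m)) \<le> Suc (Suc m)"
    unfolding Gz_Suc using Suc Pz_ne[of m] by (simp add: degree_pCons_eq)
  moreover have "coeff (Pz (Suc m)) 0 = 1" using Suc by (simp add: Pz_Suc)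
  moreover have "Gz (Suc m) \<noteq> 0" using Suc by (auto simp: Gz_Suc)
  ultimately show ?case by simp
qed


lemma fg_main:
  "fg (2*m) = (H (Suc m) (Pz m), H (Suc m) (Gz m)) \<and>
   fg (Suc (2*m)) = (H (Suc m) (Pz m), Zf * H (Suc m) (Gz m))"
proof (induction m)
  case 0
  have d: "Delta (H 1 (Pz 0)) 2 = 0"
    using Delta_H_fps[of "Pz 0" 1 2] PR_coeffs(1)[of 0] PG_props[of 0] Pz_ne[of 0] by simp
  have d': "Delta (Xf + Zf) 2 = 0" "Delta (Xf + Zf) (Suc (Suc 0)) = 0"
    using d H_base[simplified] by (simp_all add: Pz_0 numeral_2_eq_2)
  show ?case using d' H_base[simplified] by (simp add: Pz_0 Gz_0 Let_def)
next
  case (Suc m)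
  have degs: "degree (Pz m) \<le> Suc m" "degree (Gz m) \<le> Suc m" "Gz m \<noteq> 0"
    using PG_props[of m] by auto
  have f1: "fg (Suc (Suc (2*m))) = (H (Suc (Suc m)) (Pz (Suc m)), H (Suc (Suc m)) (Gz (Suc m)))"
  proof -
    have g: "Zf * H (Suc m) (Gz m) = H (Suc (Suc m)) (pCons 0 (Gz m))" using degs by (simp add: H_Z)
    have d1: "Delta (H (Suc m) (Pz m)) (Suc (2*m) + 2) = 1"
      using Delta_H_fps[of "Pz m" "Suc m" "Suc (2*m) + 2"] PR_coeffs(2)[of m] degs Pz_ne[of m] by simp
    have t1: "tdeg (H (Suc m) (Pz m)) = Suc m" using degs Pz_ne[of m] by (simp add: tdeg_H)
    have t2: "tdeg (H (Suc (Suc m)) (pCons 0 (Gz m))) = Suc (Suc m)"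
      using degs by (intro tdeg_H) auto
    have "fg (Suc (Suc (2*m))) = (Xf * H (Suc m) (Pz m) + H (Suc (Suc m)) (pCons 0 (Gz m)),
                                   Zf * H (Suc m) (Pz m))"
    proof -
      have ih2: "fg (Suc (2*m)) = (H (Suc m) (Pz m), H (Suc (Suc m)) (pCons 0 (Gz m)))"
        using conjunct2[OF Suc.IH] unfolding g .
      show ?thesis
        by (subst fg.simps(2), simp only: ih2) (simp add: Let_def d1[simplified] t1 t2)
    qed
    also have "\<dots> = (H (Suc (Suc m)) (Pz (Suc m)), H (Suc (Suc m)) (Gz (Suc m)))"
      using degs by (simp add: H_X H_Z H_add Pz_Suc Gz_Suc)
    finally show ?thesis .
  qed
  have f2: "fg (Suc (Suc (Suc (2*m)))) = (H (Suc (Suc m)) (Pz (Suc m)), Zf * H (Suc (Suc m)) (Gz (Suc m)))"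
  proof -
    have d0: "Delta (H (Suc (Suc m)) (Pz (Suc m))) (Suc (Suc (2*m)) + 2) = 0"
      using Delta_H_fps[of "Pz (Suc m)" "Suc (Suc m)" "Suc (Suc (2*m)) + 2"] PR_coeffs(1)[of "Suc m"]
        PG_props[of "Suc m"] Pz_ne[of "Suc m"] by simp
    show ?thesis
      by (subst fg.simps(2), simp only: f1) (simp add: Let_def d0[simplified])
  qed
  show ?case using f1 f2 by simp
qed



lemma two_F: "(2::bit poly fract) = 0"
proof -
  have "(2::bit poly) = 0" by (simp add: numeral_poly)
  then show ?thesis by (metis one_add_one to_fract_1 to_fract_add to_fract_0)
qed

lemma two_K: "(2::bit poly fract poly) = 0"
  using two_F by (simp add: numeral_poly)

lemma ev_add: "eval_z1 (F + G) = eval_z1 F + eval_z1 G"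
  by (simp add: eval_z1_def)
lemma ev_X: "eval_z1 (Xf * F) = [:0,1:] * eval_z1 F"
  by (simp add: eval_z1_def Xf_def)
lemma ev_Z: "eval_z1 (Zf * F) = eval_z1 F"
  by (simp add: eval_z1_def Zf_def)
lemma ev_Zf: "eval_z1 Zf = 1" by (simp add: eval_z1_def Zf_def)
lemma ev_Xf: "eval_z1 Xf = [:0,1:]" by (simp add: eval_z1_def Xf_def)

fun Ez :: "nat \<Rightarrow> bit poly" where
  "Ez 0 = 1"
| "Ez (Suc m) = eval_z1 (H (Suc m) (Pz m))"

lemma Ez_props: "eval_z1 (H (Suc m) (Gz m)) = Ez m \<and>
   Ez (Suc (Suc m)) = [:0,1:] * Ez (Suc m) + Ez m"
proof -
  have degs: "degree (Pz m) \<le> Suc m" "degree (Gz m) \<le> Suc m"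
    using PG_props[of m] by auto
  have a: "H (Suc (Suc m)) (Pz (Suc m)) = Xf * H (Suc m) (Pz m) + Zf * H (Suc m) (Gz m)"
    using degs by (simp add: H_X H_Z H_add Pz_Suc)
  have g: "eval_z1 (H (Suc m) (Gz m)) = Ez m"
  proof (cases m)
    case 0
    then show ?thesis using H_base[simplified] by (simp add: Gz_0 ev_Zf)
  next
    case (Suc m')
    have "degree (Pz m') \<le> Suc m'" using PG_props[of m'] by auto
    then have "H (Suc m) (Gz m) = Zf * H (Suc m') (Pz m')"
      using Suc by (simp add: H_Z Gz_Suc)
    then show ?thesis using Suc by (simp add: ev_Z)
  qed
  show ?thesis using g a by (simp add: ev_add ev_X ev_Z)
qed

lemma Ez_1: "Ez (Suc 0) = [:1,1:]"
  using H_base[simplified] by (simp add: Pz_0 ev_add ev_Xf ev_Zf one_pCons)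

definition Xc :: "bit poly fract poly" where "Xc = [:xK:]"
definition L :: "nat \<Rightarrow> bit poly fract poly" where "L k = [:xK * to_fract (Ez k):]"

lemma const_mult: "[:a:] * [:b:] = [:a * b::'a::comm_ring_1:]" by simp
lemma const_add: "[:a:] + [:b:] = [:a + b::'a::comm_ring_1:]" by simp

lemma L_0: "L 0 = Xc" by (simp add: L_def Xc_def)
lemma L_1: "L (Suc 0) = Xc * Xc + Xc"
proof -
  have "[:1,1:] = (1::bit poly) + [:0,1:]" by (simp add: one_pCons)
  then have "to_fract (Ez (Suc 0)) = 1 + xK" by (simp only: Ez_1 xK_def to_fract_add to_fract_1)
  then show ?thesis by (simp add: L_def Xc_def algebra_simps)
qed
lemma L_SS: "L (Suc (Suc k)) = Xc * L (Suc k) + L k"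
proof -
  have "to_fract (Ez (Suc (Suc k))) = xK * to_fract (Ez (Suc k)) + to_fract (Ez k)"
    using conjunct2[OF Ez_props[of k]] by (simp only: xK_def to_fract_add to_fract_mult)
  then show ?thesis by (simp add: L_def Xc_def algebra_simps)
qed

definition U :: "bit poly fract poly \<Rightarrow> nat \<Rightarrow> bit poly fract poly" where
  "U s k = (1 + s) * s ^ k"

lemma U_rec:
  assumes "s * s = mY + Xc * s + 1"
  shows "mY dvd (U s (Suc (Suc k)) - Xc * U s (Suc k) - U s k)"
proof -
  have "U s (Suc (Suc k)) - Xc * U s (Suc k) - U s k = (1 + s) * s ^ k * (s * s - Xc * s - 1)"
    by (simp add: U_def algebra_simps)
  also have "\<dots> = mY * ((1 + s) * s ^ k)" by (simp add: assms algebra_simps)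
  finally show ?thesis by simp
qed

lemma rho_sq: "rho * rho = mY + Xc * rho + 1"
proof -
  have "mY + Xc * rho + 1 = rho * rho + [:2, 2 * xK:]"
    by (simp add: mY_def Xc_def rho_def one_pCons algebra_simps mult_2)
  then show ?thesis using two_F by simp
qed

lemma sig_sq: "(rho + Xc) * (rho + Xc) = mY + Xc * (rho + Xc) + 1"
proof -
  have "(rho + Xc) * (rho + Xc) = mY + Xc * (rho + Xc) + 1 + (rho * rho - mY - Xc * rho - 1) + 2 * Xc * rho"
    by algebra
  then show ?thesis using rho_sq two_K by simp
qed

definition T' :: "nat \<Rightarrow> bit poly fract poly" where "T' k = U rho k + U (rho + Xc) k"

lemma T'_L: "mY dvd (T' k - L k) \<and> mY dvd (T' (Suc k) - L (Suc k))"
proof (induction k)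
  case 0
  have a: "T' 0 - L 0 = 2 * (1 + rho)" by (simp add: T'_def U_def L_0 algebra_simps mult_2)
  have b: "T' (Suc 0) - L (Suc 0) = 2 * (rho + rho * rho + Xc * rho)"
    by (simp add: T'_def U_def L_1 algebra_simps mult_2)
  show ?case using a b two_K by simp
next
  case (Suc k)
  have "T' (Suc (Suc k)) - L (Suc (Suc k)) =
     (U rho (Suc (Suc k)) - Xc * U rho (Suc k) - U rho k)
     + (U (rho + Xc) (Suc (Suc k)) - Xc * U (rho + Xc) (Suc k) - U (rho + Xc) k)
     + Xc * (T' (Suc k) - L (Suc k)) + (T' k - L k)"
    by (simp add: T'_def L_SS algebra_simps)
  moreover have "mY dvd \<dots>"
    using Suc.IH U_rec[OF rho_sq, of k] U_rec[OF sig_sq, of k]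
    by (intro dvd_add dvd_mult) auto
  ultimately show ?case using Suc.IH by simp
qed

lemma one_mod_mY: "(1::bit poly fract poly) mod mY = 1"
  by (rule mod_poly_less) (simp add: mY_def)

lemma final_K:
  assumes "(rho * rho_inv) mod mY = 1"
  shows "L k mod mY = ((1 + rho) * rho ^ k + (1 + rho_inv) * rho_inv ^ k) mod mY"
proof -
  have h1: "mY dvd (rho * rho_inv - 1)"
    using assms one_mod_mY by (simp add: mod_eq_dvd_iff[symmetric])
  have "rho_inv - (rho + Xc) = rho_inv * (1 - rho * rho - Xc * rho) + (rho * rho_inv - 1) * (rho + Xc)"
    by algebra
  also have "rho_inv * (1 - rho * rho - Xc * rho) = rho_inv * (- mY) - 2 * (rho_inv * Xc * rho)"
    by (simp add: rho_sq algebra_simps mult_2)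
  finally have "rho_inv - (rho + Xc) = rho_inv * (- mY) + (rho * rho_inv - 1) * (rho + Xc)"
    using two_K by simp
  then have "mY dvd (rho_inv - (rho + Xc))" using h1 by simp
  then have r: "rho_inv mod mY = (rho + Xc) mod mY" by (simp add: mod_eq_dvd_iff)
  have p: "rho_inv ^ k mod mY = (rho + Xc) ^ k mod mY"
    by (metis power_mod r)
  have q: "(1 + rho_inv) mod mY = (1 + (rho + Xc)) mod mY"
    by (rule mod_add_cong) (simp_all add: r)
  have s: "((1 + rho_inv) * rho_inv ^ k) mod mY = ((1 + (rho + Xc)) * (rho + Xc) ^ k) mod mY"
    by (rule mod_mult_cong[OF q p])
  have t: "((1 + rho) * rho ^ k + (1 + rho_inv) * rho_inv ^ k) mod mY = T' k mod mY"
    unfolding T'_def U_def by (rule mod_add_cong[OF refl s])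
  have "L k mod mY = T' k mod mY"
    using conjunct1[OF T'_L[of k]] by (metis mod_eq_dvd_iff dvd_minus_iff minus_diff_eq)
  then show ?thesis using t by simp
qed

theorem theorem4:
  fixes k :: nat and rho_inv :: "bit poly fract poly"
  assumes "k \<ge> 1"
    and "(rho * rho_inv) mod mY = 1"
  shows "[: xK * to_fract (eval_z1 (fst (fg (2 * k - 2)))) :] mod mY
           = ((1 + rho) * rho ^ k + (1 + rho_inv) * rho_inv ^ k) mod mY
       \<and> [: xK * to_fract (eval_z1 (fst (fg (2 * k - 1)))) :] mod mY
           = ((1 + rho) * rho ^ k + (1 + rho_inv) * rho_inv ^ k) mod mY"
proof -
  obtain k' where k: "k = Suc k'" using assms(1) by (cases k) auto
  have e1: "2 * k - 2 = 2 * k'" and e2: "2 * k - 1 = Suc (2 * k')" using k by simp_all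
  have f: "fst (fg (2 * k - 2)) = H (Suc k') (Pz k')" "fst (fg (2 * k - 1)) = H (Suc k') (Pz k')"
    unfolding e1 e2 by (simp_all only: conjunct1[OF fg_main[of k']] conjunct2[OF fg_main[of k']] fst_conv)
  have l: "[: xK * to_fract (eval_z1 (H (Suc k') (Pz k'))) :] = L k"
    by (simp add: L_def k)
  show ?thesis unfolding f l using final_K[OF assms(2)] by simp
qed


end
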